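(* Let $\kappa=0$ and $c=\cos\alpha\ge 0$. Then for every $g\in SO(3)$ there is an optimal decomposition of $g$ which is a subword of one of the following patterns, or of an image of one of them under the group $(X,Y)\mapsto(\pm X,\pm Y)$: (IX) $R(\pi Y)\,R(tW_+)\,R(\pi Y)$ with $t\ge0$; (X) $R(\pi Y)\,R(tW_+)\,R(-\pi Y)$ with $t\ge 0$. (Here $W_+=W_-=X-cY$.)
   Context: Fix unit vectors $X,Y\in\mathbb R^3$ with angle $\alpha\in(0,\pi/2]$, $c=\cos\alpha$, and $\kappa\in[0,1]$. For a unit vector $v$, $R(tv)\in SO(3)$ is rotation by angle $t$ about $v$ (counterclockwise viewed from the tip): $R(tv)=\cos t\,I+\sin t\,[v]_\times+(1-\cos t)vv^T$; for nonzero non-unit $v$, $R(tv):=R((t|v|)\,v/|v|)$. For nonzero $C=aX+bY$, $\mathrm{cost}(C)=|a|+\kappa|b|$. A decomposition of $g\in SO(3)$ is a finite product $g=R(\tau_1C_1)\cdots R(\tau_nC_n)$ with $\tau_j\ge0$, $C_j$ nonzero in $\mathrm{span}\{X,Y\}$ (a factor $R(-\tau C)$, $\tau\ge0$, means $R(\tau(-C))$), with cost $\sum\tau_j\mathrm{cost}(C_j)$. Problem 1: minimize the cost over all decompositions of $g$; a decomposition is optimal if its cost equals the infimum. $W_+=(1+\kappa c)X-(\kappa+c)Y$, $W_-=(1-\kappa c)X+(\kappa-c)Y$. Subword: for a word $R(\tau_1C_1)\cdots R(\tau_nC_n)$ ($\tau_j\ge0$), a subword is $R(\tau_k'C_k)R(\tau_{k+1}C_{k+1})\cdots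 R(\tau_{m-1}C_{m-1})R(\tau_m'C_m)$ with $1\le k\le m\le n$, $0\le\tau_k'\le\tau_k$, $0\le\tau_m'\le\tau_m$. Symmetries: with labels $\pm X,\pm Y,\pm W_\pm$, let $\nu:C\mapsto-C$ and $\rho:X\mapsto X,\ Y\mapsto-Y,\ W_+\mapsto W_-,\ W_-\mapsto W_+$ (extended by $\rho(-C)=-\rho(C)$); applying them replaces each label by its image and keeps the times. "Under $(X,Y)\mapsto(\pm X,\pm Y)$" means images under the group $\{\mathrm{id},\nu,\rho,\nu\rho\}$. *)

theory Defs
  imports "HOL-Analysis.Analysis"
begin

definition SO3 :: "(real^3^3) set" where
  "SO3 = {g. orthogonal_matrix g \<and> det g = 1}"

(* cross-product matrix [v]_x, so that [v]_x *v w = v \<times> w *)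
definition cross_mat :: "real^3 \<Rightarrow> real^3^3" where
  "cross_mat v = vector [vector [0, - v$3, v$2],
                         vector [v$3, 0, - v$1],
                         vector [- v$2, v$1, 0]]"

definition outer :: "real^3 \<Rightarrow> real^3 \<Rightarrow> real^3^3" where
  "outer u v = (\<chi> i j. u$i * v$j)"

(* R(t v) for unit v *)
definition rot_unit :: "real \<Rightarrow> real^3 \<Rightarrow> real^3^3" where
  "rot_unit t v = cos t *\<^sub>R mat 1 + sin t *\<^sub>R cross_mat v + (1 - cos t) *\<^sub>R outer v v"

definition rot :: "real \<Rightarrow> real^3 \<Rightarrow> real^3^3" where
  "rot t v = rot_unit (t * norm v) (inverse (norm v) *\<^sub>R v)"

definition cost :: "real \<Rightarrow> real^3 \<Rightarrow> real^3 \<Rightarrow> real^3 \<Rightarrow> real" where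
  "cost \<kappa> X Y C = (THE r. \<exists>a b. C = a *\<^sub>R X + b *\<^sub>R Y \<and> r = \<bar>a\<bar> + \<kappa> * \<bar>b\<bar>)"

(* a word R(tau_1 C_1) ... R(tau_n C_n) is a list of pairs (tau_j, C_j) *)
definition word_prod :: "(real \<times> (real^3)) list \<Rightarrow> real^3^3" where
  "word_prod ds = foldr (\<lambda>(t, C) M. rot t C ** M) ds (mat 1)"

definition is_decomp :: "real^3 \<Rightarrow> real^3 \<Rightarrow> real^3^3 \<Rightarrow> (real \<times> (real^3)) list \<Rightarrow> bool" where
  "is_decomp X Y g ds \<longleftrightarrow>
     (\<forall>(t, C) \<in> set ds. 0 \<le> t \<and> C \<noteq> 0 \<and> C \<in> span {X, Y}) \<and> word_prod ds = g"

definition word_cost :: "real \<Rightarrow> real^3 \<Rightarrow> real^3 \<Rightarrow> (real \<times> (real^3)) list \<Rightarrow> real" where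
  "word_cost \<kappa> X Y ds = sum_list (map (\<lambda>(t, C). t * cost \<kappa> X Y C) ds)"

definition optimal_decomp :: "real \<Rightarrow> real^3 \<Rightarrow> real^3 \<Rightarrow> real^3^3 \<Rightarrow> (real \<times> (real^3)) list \<Rightarrow> bool" where
  "optimal_decomp \<kappa> X Y g ds \<longleftrightarrow> is_decomp X Y g ds \<and>
     word_cost \<kappa> X Y ds = Inf (word_cost \<kappa> X Y ` {ds'. is_decomp X Y g ds'})"

(* labels X, Y, W+, W- with a sign (True = +, False = -) *)
datatype lab = LX | LY | LWp | LWm

type_synonym slab = "bool \<times> lab"

definition lab_vec :: "real \<Rightarrow> real \<Rightarrow> real^3 \<Rightarrow> real^3 \<Rightarrow> lab \<Rightarrow> real^3" where
  "lab_vec \<kappa> c X Y l = (case l of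
       LX \<Rightarrow> X
     | LY \<Rightarrow> Y
     | LWp \<Rightarrow> (1 + \<kappa> * c) *\<^sub>R X - (\<kappa> + c) *\<^sub>R Y
     | LWm \<Rightarrow> (1 - \<kappa> * c) *\<^sub>R X + (\<kappa> - c) *\<^sub>R Y)"

definition slab_vec :: "real \<Rightarrow> real \<Rightarrow> real^3 \<Rightarrow> real^3 \<Rightarrow> slab \<Rightarrow> real^3" where
  "slab_vec \<kappa> c X Y sl = (if fst sl then lab_vec \<kappa> c X Y (snd sl) else - lab_vec \<kappa> c X Y (snd sl))"

definition nu :: "slab \<Rightarrow> slab" where
  "nu sl = (\<not> fst sl, snd sl)"

definition rho_lab :: "lab \<Rightarrow> slab" where
  "rho_lab l = (case l of LX \<Rightarrow> (True, LX) | LY \<Rightarrow> (False, LY)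
                 | LWp \<Rightarrow> (True, LWm) | LWm \<Rightarrow> (True, LWp))"

(* rho(-C) = -rho(C) *)
definition rho :: "slab \<Rightarrow> slab" where
  "rho sl = (fst sl = fst (rho_lab (snd sl)), snd (rho_lab (snd sl)))"

definition sym_group :: "(slab \<Rightarrow> slab) set" where
  "sym_group = {id, nu, rho, nu \<circ> rho}"

definition pattern_IX :: "real \<Rightarrow> (real \<times> slab) list" where
  "pattern_IX t = [(pi, (True, LY)), (t, (True, LWp)), (pi, (True, LY))]"

definition pattern_X :: "real \<Rightarrow> (real \<times> slab) list" where
  "pattern_X t = [(pi, (True, LY)), (t, (True, LWp)), (pi, (False, LY))]"

definition is_subword :: "(real \<times> 'a) list \<Rightarrow> (real \<times> 'a) list \<Rightarrow> bool" where
  "is_subword v w \<longleftrightarrow> (\<exists>k m t1 t2. k \<le> m \<and> m < length w \<and>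
      0 \<le> t1 \<and> t1 \<le> fst (w ! k) \<and> 0 \<le> t2 \<and> t2 \<le> fst (w ! m) \<and>
      v = (if k = m then [(t1, snd (w ! k))]
           else [(t1, snd (w ! k))] @ take (m - k - 1) (drop (k + 1) w) @ [(t2, snd (w ! m))]))"

definition eval_word :: "real \<Rightarrow> real \<Rightarrow> real^3 \<Rightarrow> real^3 \<Rightarrow> (real \<times> slab) list \<Rightarrow> (real \<times> (real^3)) list" where
  "eval_word \<kappa> c X Y w = map (\<lambda>(t, sl). (t, slab_vec \<kappa> c X Y sl)) w"

definition apply_sym :: "(slab \<Rightarrow> slab) \<Rightarrow> (real \<times> slab) list \<Rightarrow> (real \<times> slab) list" where
  "apply_sym \<sigma> w = map (\<lambda>(t, sl). (t, \<sigma> sl)) w"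

end

theory Submission
  imports Defs "HOL-Analysis.Cross3"
begin
unbundle cross3_syntax



lemma sin_concave: fixes r x :: real
  assumes "0 \<le> r" "r \<le> 1" "0 \<le> x" "x \<le> pi"
  shows "r * sin x \<le> sin (r * x)"
proof -
  have "(\<lambda>y. sin (r*y) - r * sin y) 0 \<le> (\<lambda>y. sin (r*y) - r * sin y) x"
  proof (rule DERIV_nonneg_imp_nondecreasing[OF assms(3)])
    fix y assume y: "0 \<le> y" "y \<le> x"
    have d: "DERIV (\<lambda>y. sin (r*y) - r * sin y) y :> (cos (r*y) * r - r * cos y)"
      by (auto intro!: derivative_eq_intros)
    have "r*y \<le> y" using y assms by (simp add: mult_left_le_one_le)
    then have "cos y \<le> cos (r*y)" using y assms by (intro cos_monotone_0_pi_le) auto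
    then have "0 \<le> cos (r*y) * r - r * cos y" using assms
      by (metis diff_ge_0_iff_ge mult.commute mult_left_mono)
    then show "\<exists>d. DERIV (\<lambda>y. sin (r*y) - r * sin y) y :> d \<and> d \<ge> 0" using d by blast
  qed
  then show ?thesis by simp
qed

lemma rot_angle_bound: fixes r th :: real
  assumes "0 \<le> r" "r \<le> 1" "0 \<le> th"
  shows "arccos (1 - (1 - cos th) * r^2) \<le> th * r"
proof -
  define th' where "th' = arccos (cos th)"
  have th'1: "0 \<le> th'" "th' \<le> pi" "cos th' = cos th" unfolding th'_def
    by (auto intro: arccos_lbound arccos_ubound)
  have th'2: "th' \<le> th"
  proof (cases "th \<le> pi")
    case True then show ?thesis using assms by (simp add: th'_def arccos_cos)
  next
    case False then show ?thesis using th'1 by simp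
  qed
  define x where "x = th' / 2"
  have x: "0 \<le> x" "x \<le> pi/2" using th'1 by (auto simp: x_def)
  have sx: "r * sin x \<le> sin (r * x)" using sin_concave[of r x] x assms by simp
  have sx0: "0 \<le> r * sin x" using x assms by (simp add: sin_ge_zero)
  have "(r * sin x)^2 \<le> (sin (r*x))^2" using sx sx0 by (simp add: power_mono)
  have c1: "cos th' = 1 - 2 * (sin x)^2" unfolding x_def by (simp add: cos_double_sin[symmetric]) 
  have c2: "cos (th' * r) = 1 - 2 * (sin (r*x))^2" unfolding x_def
    by (metis cos_double_sin mult.commute times_divide_eq_right nonzero_mult_div_cancel_left zero_neq_numeral
        mult_2 add_divide_distrib field_sum_of_halves)
  have le: "cos (th' * r) \<le> 1 - (1 - cos th) * r^2"
  proof -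
    have "(sin x)^2 = (1 - cos th)/2" using c1 th'1(3) by simp
    then have "(r * sin x)^2 = r^2 * ((1 - cos th)/2)" by (simp add: power_mult_distrib)
    then show ?thesis using c2 \<open>(r * sin x)^2 \<le> (sin (r*x))^2\<close> by (simp add: algebra_simps)
  qed
  have rng: "0 \<le> th' * r" "th' * r \<le> pi" using th'1 assms
    by (auto intro: order.trans[OF mult_right_le_one_le])
  have b1: "\<bar>1 - (1 - cos th) * r^2\<bar> \<le> 1"
  proof -
    have "0 \<le> 1 - cos th" "1 - cos th \<le> 2" by (auto simp: cos_ge_minus_one)
    moreover have "r^2 \<le> 1" "0 \<le> r^2" using assms by (auto simp: power_le_one)
    ultimately have "(1 - cos th) * r^2 \<le> 2"
      by (meson mult_right_le_one_le order.trans)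
    moreover have "0 \<le> (1 - cos th) * r^2" using \<open>0 \<le> 1 - cos th\<close> by simp
    ultimately show ?thesis by (simp add: abs_le_iff)
  qed
  have "arccos (1 - (1 - cos th) * r^2) \<le> arccos (cos (th' * r))"
    using le b1 by (subst arccos_le_mono) auto
  also have "\<dots> = th' * r" using rng by (simp add: arccos_cos)
  also have "\<dots> \<le> th * r" using th'2 assms by (simp add: mult_right_mono)
  finally show ?thesis .
qed

lemma inner_unit_bound: fixes a b :: "'a::real_inner"
  assumes "norm a = 1" "norm b = 1" shows "\<bar>a \<bullet> b\<bar> \<le> 1"
  using Cauchy_Schwarz_ineq2[of a b] assms by simp

lemma arccos_tri: fixes a b c :: "'a::real_inner"
  assumes a: "norm a = 1" and b: "norm b = 1" and c: "norm c = 1"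
  shows "arccos (a \<bullet> c) \<le> arccos (a \<bullet> b) + arccos (b \<bullet> c)"
proof -
  define A where "A = arccos (a \<bullet> b)"
  define B where "B = arccos (b \<bullet> c)"
  have ab: "\<bar>a \<bullet> b\<bar> \<le> 1" and bc: "\<bar>b \<bullet> c\<bar> \<le> 1" and ac: "\<bar>a \<bullet> c\<bar> \<le> 1"
    using inner_unit_bound assms by blast+
  have A: "0 \<le> A" "A \<le> pi" "cos A = a \<bullet> b" "sin A = sqrt (1 - (a \<bullet> b)^2)"
    using ab by (auto simp: A_def arccos_lbound arccos_ubound sin_arccos abs_le_iff)
  have B: "0 \<le> B" "B \<le> pi" "cos B = b \<bullet> c" "sin B = sqrt (1 - (b \<bullet> c)^2)"
    using bc by (auto simp: B_def arccos_lbound arccos_ubound sin_arccos abs_le_iff)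
  show ?thesis
  proof (cases "A + B \<le> pi")
    case False
    then show ?thesis using arccos_ubound[of "a \<bullet> c"] ac unfolding A_def B_def by (auto simp: abs_le_iff)
  next
    case True
    define a' where "a' = a - (a \<bullet> b) *\<^sub>R b"
    define c' where "c' = c - (b \<bullet> c) *\<^sub>R b"
    have bb: "b \<bullet> b = 1" using b by (simp add: norm_eq_1)
    have aa: "a \<bullet> a = 1" using a by (simp add: norm_eq_1)
    have cc: "c \<bullet> c = 1" using c by (simp add: norm_eq_1)
    have dec: "a \<bullet> c = (a \<bullet> b) * (b \<bullet> c) + a' \<bullet> c'"
      unfolding a'_def c'_def by (simp add: algebra_simps inner_commute bb)
    have na: "(norm a')^2 = 1 - (a \<bullet> b)^2"
      unfolding a'_def power2_norm_eq_inner by (simp add: algebra_simps inner_commute bb aa power2_eq_square)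
    have nc: "(norm c')^2 = 1 - (b \<bullet> c)^2"
      unfolding c'_def power2_norm_eq_inner by (simp add: algebra_simps inner_commute bb cc power2_eq_square)
    have "norm a' = sin A" using na A by (simp add: real_sqrt_unique)
    moreover have "norm c' = sin B" using nc B by (simp add: real_sqrt_unique)
    moreover have "- (norm a' * norm c') \<le> a' \<bullet> c'"
      using Cauchy_Schwarz_ineq2[of a' c'] by (simp add: abs_le_iff)
    ultimately have "cos (A + B) \<le> a \<bullet> c" using dec A B by (simp add: cos_add)
    then have "arccos (a \<bullet> c) \<le> arccos (cos (A + B))"
      using ac by (subst arccos_le_mono) (auto simp: abs_le_iff)
    also have "\<dots> = A + B" using True A B by (simp add: arccos_cos)
    finally show ?thesis unfolding A_def B_def .
  qed
qed




lemma rod: "rot_unit t v *v w = cos t *\<^sub>R w + sin t *\<^sub>R (v \<times> w) + ((1 - cos t) * (v \<bullet> w)) *\<^sub>R v"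
  by (simp add: rot_unit_def cross_mat_def outer_def vec_eq_iff forall_3 matrix_vector_mult_def sum_3 cross3_simps mat_def)

lemma unit_comp: "norm (v::real^3) = 1 \<Longrightarrow> v$1 * v$1 + v$2 * v$2 + v$3 * v$3 = 1"
  by (simp add: norm_eq_1 inner_vec_def sum_3)

lemma sc1: "sin (t::real) * sin t + cos t * cos t = 1" using sin_cos_squared_add[of t] by (simp add: power2_eq_square)

lemma cross_dot_cross: "(v \<times> w) \<bullet> (v \<times> w') = (v \<bullet> v)*(w \<bullet> w') - (v \<bullet> w)*(v \<bullet> w')"
  by (simp add: cross3_simps)

lemma cross_dot_swap: "(v \<times> w) \<bullet> w' = - (w \<bullet> (v \<times> w'))"
  by (simp add: cross3_simps)

lemma rod_dot: assumes "norm v = 1"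
  shows "(rot_unit t v *v w) \<bullet> (rot_unit t v *v w') = w \<bullet> w'"
proof -
  have vv: "v \<bullet> v = 1" using assms by (simp add: norm_eq_1)
  have sc: "sin t * sin t + cos t * cos t = 1" by (rule sc1)
  define c where "c = cos t"
  define s where "s = sin t"
  define P where "P = w \<bullet> (v \<times> w')"
  define a where "a = v \<bullet> w"
  define b where "b = v \<bullet> w'"
  define q where "q = w \<bullet> w'"
  have f1a: "(v \<times> w) \<bullet> w' = - P" unfolding P_def by (rule cross_dot_swap)
  have f1b: "w' \<bullet> (v \<times> w) = - P" using f1a by (simp only: inner_commute)
  have f1c: "(v \<times> w') \<bullet> w = P" using cross_dot_swap[of v w' w] f1b by simp
  have f1d: "w \<bullet> (v \<times> w') = P" unfolding P_def ..
  note f1 = f1a f1b f1c f1d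
  have f2: "(v \<times> w) \<bullet> (v \<times> w') = q - a * b" unfolding q_def a_def b_def by (simp add: cross_dot_cross vv)
  have f3: "w \<bullet> v = a" "v \<bullet> w = a" "w' \<bullet> v = b" "v \<bullet> w' = b" "w' \<bullet> w = q" "w \<bullet> w' = q"
    by (simp_all add: a_def b_def q_def inner_commute)
  have f4: "(v \<times> w) \<bullet> v = 0" "v \<bullet> (v \<times> w') = 0" "(v \<times> w') \<bullet> v = 0" "v \<bullet> (v \<times> w) = 0"
    by (simp_all add: dot_cross_self)
  have sc': "s * s + c * c = 1" using sc by (simp add: c_def s_def)
  have "(rot_unit t v *v w) \<bullet> (rot_unit t v *v w') =
     (c *\<^sub>R w + s *\<^sub>R (v \<times> w) + ((1 - c) * a) *\<^sub>R v) \<bullet> (c *\<^sub>R w' + s *\<^sub>R (v \<times> w') + ((1 - c) * b) *\<^sub>R v)"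
    unfolding rod c_def[symmetric] s_def[symmetric] a_def b_def ..
  also have "\<dots> = q"
    apply (simp only: inner_add_left inner_add_right inner_scaleR_left inner_scaleR_right f1 f2 f3 f4 vv)
    using sc' by algebra
  finally show ?thesis by (simp add: q_def)
qed

lemma orth_inner: "orthogonal_matrix (A::real^'n^'n) \<Longrightarrow> (A *v x) \<bullet> (A *v y) = x \<bullet> y"
proof -
  assume "orthogonal_matrix A"
  then have "orthogonal_transformation ((*v) A)"
    using orthogonal_transformation_matrix[of "(*v) A"] by (simp add: matrix_vector_mul_linear)
  then show ?thesis by (simp add: orthogonal_transformation_def)
qed

lemma orth_norm: "orthogonal_matrix (A::real^'n^'n) \<Longrightarrow> norm (A *v x) = norm x"
  by (simp add: norm_eq_sqrt_inner orth_inner)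

lemma orth_rot_unit: "norm v = 1 \<Longrightarrow> orthogonal_matrix (rot_unit t v)"
proof -
  assume "norm v = 1"
  then have "orthogonal_transformation ((*v) (rot_unit t v))"
    by (simp add: orthogonal_transformation_def rod_dot matrix_vector_mul_linear)
  then show ?thesis using orthogonal_transformation_matrix[of "(*v) (rot_unit t v)"] by simp
qed


lemma rod_fix: "norm v = 1 \<Longrightarrow> rot_unit t v *v v = v"
  by (simp add: rod norm_eq_1 algebra_simps)

lemma det_rot_unit: assumes v: "norm v = 1" shows "det (rot_unit t v) = 1"
proof -
  let ?R = "rot_unit t v"
  have o: "orthogonal_matrix ?R" using v by (rule orth_rot_unit)
  have "v \<noteq> 0" using v by auto
  then obtain y where y: "v \<times> y \<noteq> 0" using cross_basis_nonzero by blast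
  have "(?R *v v) \<times> (?R *v y) = det ?R *\<^sub>R (?R *v (v \<times> y))" by (rule cross_orthogonal_matrix[OF o])
  moreover have "(?R *v v) \<times> (?R *v y) = ?R *v (v \<times> y)"
    using v by (simp add: rod_fix) (simp add: rod cross_add_right cross_mult_right dot_cross_self)
  ultimately have "(det ?R - 1) *\<^sub>R (?R *v (v \<times> y)) = 0" by (simp add: algebra_simps)
  moreover have "?R *v (v \<times> y) \<noteq> 0" using orth_norm[OF o, of "v \<times> y"] y by auto
  ultimately show ?thesis by simp
qed

lemma rotm_rot_unit: "norm v = 1 \<Longrightarrow> rotation_matrix (rot_unit t v)"
  by (simp add: rotation_matrix_def orth_rot_unit det_rot_unit)

lemma rotm_mul: "rotation_matrix A \<Longrightarrow> rotation_matrix B \<Longrightarrow> rotation_matrix (A ** (B::real^'n^'n))"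
  by (simp add: rotation_matrix_def orthogonal_matrix_mul det_mul)

lemma rot_alt: "C \<noteq> 0 \<Longrightarrow> rot t C = rot_unit (t * norm C) (inverse (norm C) *\<^sub>R C)"
  by (simp add: rot_def)

lemma norm_unitize: "C \<noteq> 0 \<Longrightarrow> norm (inverse (norm C) *\<^sub>R C) = 1"
  by simp

lemma rotm_rot: "C \<noteq> 0 \<Longrightarrow> rotation_matrix (rot t C)"
  by (simp add: rot_def rotm_rot_unit)

lemma rot_unit_neg: "rot_unit t (- v) = rot_unit (- t) v"
  by (simp add: matrix_eq rod)

lemma rot_unit_per: "rot_unit (t - 2 * pi) v = rot_unit t v"
proof -
  have "cos (t - 2*pi) = cos t" "sin (t - 2*pi) = sin t"
    by (simp_all add: cos_diff sin_diff)
  then show ?thesis by (simp add: rot_unit_def)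
qed

lemma dot_transpose: "(y::real^'n) \<bullet> (A *v z) = (transpose A *v y) \<bullet> z"
  using vector_transpose_matrix[of y "transpose A"] dot_lmul_matrix[of y A z] by simp

lemma frame: fixes N Y :: "real^3"
  assumes N: "norm N = 1" and Y: "norm Y = 1" and NY: "N \<bullet> Y = 0"
  shows "w = (w \<bullet> N) *\<^sub>R N + (w \<bullet> Y) *\<^sub>R Y + (w \<bullet> (N \<times> Y)) *\<^sub>R (N \<times> Y)"
proof -
  define e where "e = N \<times> Y"
  define r where "r = w - (w \<bullet> N) *\<^sub>R N - (w \<bullet> Y) *\<^sub>R Y"
  have NN: "N \<bullet> N = 1" and YY: "Y \<bullet> Y = 1" using N Y by (simp_all add: norm_eq_1)
  have YN: "Y \<bullet> N = 0" using NY by (simp add: inner_commute)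
  have rN: "r \<bullet> N = 0" unfolding r_def by (simp add: inner_diff_left NN YN)
  have rY: "r \<bullet> Y = 0" unfolding r_def by (simp add: inner_diff_left YY NY)
  have ee: "e \<bullet> e = 1" using norm_cross[of N Y] N Y NY unfolding e_def
    by (simp add: power2_norm_eq_inner)
  have "r \<times> (N \<times> Y) = 0" using Lagrange[of r N Y] rN rY by simp
  then have er: "e \<times> r = 0" unfolding e_def using cross_skew[of r "N \<times> Y"] by simp
  have "e \<times> (e \<times> r) = (e \<bullet> r) *\<^sub>R e - (e \<bullet> e) *\<^sub>R r" by (rule Lagrange)
  then have "r = (e \<bullet> r) *\<^sub>R e" using er ee by simp
  moreover have "e \<bullet> r = w \<bullet> e" unfolding r_def e_def
    by (simp add: inner_diff_right dot_cross_self inner_commute)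
  ultimately show ?thesis unfolding r_def e_def by (simp add: algebra_simps)
qed




lemma euler:
  fixes N Y :: "real^3" and g :: "real^3^3"
  assumes N: "norm N = 1" and Y: "norm Y = 1" and NY: "N \<bullet> Y = 0" and g: "rotation_matrix g"
  shows "\<exists>a b. 0 \<le> a \<and> a \<le> 2*pi \<and> 0 \<le> b \<and> b \<le> 2*pi \<and>
     g = rot_unit a Y ** (rot_unit (arccos (Y \<bullet> (g *v Y))) N ** rot_unit b Y)"
proof -
  define e where "e = N \<times> Y"
  have NN: "N \<bullet> N = 1" and YY: "Y \<bullet> Y = 1" using N Y by (simp_all add: norm_eq_1)
  have YN: "Y \<bullet> N = 0" using NY by (simp add: inner_commute)
  have ee: "e \<bullet> e = 1" using norm_cross[of N Y] N Y NY unfolding e_def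
    by (simp add: power2_norm_eq_inner)
  have eN: "e \<bullet> N = 0" "N \<bullet> e = 0" and eY: "e \<bullet> Y = 0" "Y \<bullet> e = 0"
    unfolding e_def by (simp_all add: dot_cross_self)
  have Ye: "Y \<times> e = N" unfolding e_def using Lagrange[of Y N Y] YY YN by simp
  have YNc: "Y \<times> N = - e" unfolding e_def using cross_skew[of Y N] by simp
  have fr: "\<And>w. w = (w \<bullet> N) *\<^sub>R N + (w \<bullet> Y) *\<^sub>R Y + (w \<bullet> e) *\<^sub>R e"
    unfolding e_def using frame[OF N Y NY] .
  have og: "orthogonal_matrix g" using g by (simp add: rotation_matrix_def)
  define p where "p = g *v Y"
  have pp: "p \<bullet> p = 1" unfolding p_def using orth_inner[OF og, of Y Y] YY by simp
  define z where "z = Y \<bullet> p"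
  have pY: "p \<bullet> Y = z" unfolding z_def by (simp add: inner_commute)
  have "\<bar>z\<bar> \<le> 1" unfolding z_def using inner_unit_bound[of Y p] Y pp by (simp add: norm_eq_1)
  define \<beta> where "\<beta> = arccos z"
  have cb: "cos \<beta> = z" using \<open>\<bar>z\<bar> \<le> 1\<close> by (simp add: \<beta>_def abs_le_iff)
  have sb: "sin \<beta> = sqrt (1 - z^2)" using \<open>\<bar>z\<bar> \<le> 1\<close> by (simp add: \<beta>_def sin_arccos abs_le_iff)
  have sq: "(p \<bullet> N)^2 + (p \<bullet> e)^2 = 1 - z^2"
  proof -
    have "p \<bullet> p = p \<bullet> ((p \<bullet> N) *\<^sub>R N + (p \<bullet> Y) *\<^sub>R Y + (p \<bullet> e) *\<^sub>R e)" using fr[of p] by simp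
    also have "\<dots> = (p \<bullet> N)^2 + z^2 + (p \<bullet> e)^2" by (simp add: inner_add_right pY power2_eq_square)
    finally show ?thesis using pp by simp
  qed
  obtain a where a: "0 \<le> a" "a \<le> 2*pi" "p \<bullet> e = sin \<beta> * cos a" "p \<bullet> N = sin \<beta> * sin a"
  proof (cases "sin \<beta> = 0")
    case True
    then have "(p \<bullet> N)^2 + (p \<bullet> e)^2 = 0" using sq sb \<open>\<bar>z\<bar> \<le> 1\<close>
      by (metis abs_le_iff abs_square_le_1 diff_ge_0_iff_ge real_sqrt_eq_zero_cancel_iff) 
    then have "p \<bullet> N = 0" "p \<bullet> e = 0" by (simp_all add: sum_power2_eq_zero_iff)
    then show ?thesis using that[of 0] True by simp
  next
    case False
    have "(p \<bullet> e / sin \<beta>)^2 + (p \<bullet> N / sin \<beta>)^2 = 1"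
    proof -
      have "z^2 \<le> 1" using abs_square_le_1 \<open>\<bar>z\<bar> \<le> 1\<close> by blast
      then have "(sin \<beta>)^2 = 1 - z^2" using sb by simp
      then have "(sin \<beta>)^2 = (p \<bullet> N)^2 + (p \<bullet> e)^2" using sq by simp
      moreover have "(sin \<beta>)^2 \<noteq> 0" using False by simp
      ultimately show ?thesis by (simp add: power_divide add_divide_distrib[symmetric] add.commute)
    qed
    from sincos_total_2pi_le[OF this] obtain t where "0 \<le> t" "t \<le> 2*pi"
      "p \<bullet> e / sin \<beta> = cos t" "p \<bullet> N / sin \<beta> = sin t" by blast
    then show ?thesis using that[of t] False by (simp add: divide_eq_eq mult.commute)
  qed
  define A where "A = rot_unit a Y ** rot_unit \<beta> N"
  have rA: "rotation_matrix A" unfolding A_def using rotm_mul rotm_rot_unit N Y by blast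
  have oA: "orthogonal_matrix A" using rA by (simp add: rotation_matrix_def)
  have RbNY: "rot_unit \<beta> N *v Y = cos \<beta> *\<^sub>R Y + sin \<beta> *\<^sub>R e"
    by (simp add: rod NY e_def)
  have AY: "A *v Y = p"
  proof -
    have "A *v Y = rot_unit a Y *v (cos \<beta> *\<^sub>R Y + sin \<beta> *\<^sub>R e)"
      unfolding A_def by (simp add: matrix_vector_mul_assoc[symmetric] RbNY)
    also have "\<dots> = cos \<beta> *\<^sub>R Y + (sin \<beta> * cos a) *\<^sub>R e + (sin \<beta> * sin a) *\<^sub>R N"
      by (simp add: rod cross_add_right cross_mult_right Ye inner_add_right YY eY algebra_simps)
    also have "\<dots> = p" using fr[of p] a cb pY by (simp add: algebra_simps)
    finally show ?thesis .
  qed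
  define w where "w = transpose A *v (g *v N)"
  have wY: "w \<bullet> Y = 0"
  proof -
    have "w \<bullet> Y = (g *v N) \<bullet> (A *v Y)" unfolding w_def
      using dot_transpose[of Y "transpose A" "g *v N"] by (simp only: inner_commute transpose_transpose)
    also have "\<dots> = (g *v N) \<bullet> (g *v Y)" using AY p_def by simp
    also have "\<dots> = 0" using orth_inner[OF og] NY by simp
    finally show ?thesis .
  qed
  have ww: "w \<bullet> w = 1" unfolding w_def
    using orth_inner[OF og, of N N] orth_inner[of "transpose A" "g *v N" "g *v N"] oA NN by simp
  have wfr: "w = (w \<bullet> N) *\<^sub>R N + (w \<bullet> e) *\<^sub>R e" using fr[of w] wY by simp
  have "(w \<bullet> N)^2 + (w \<bullet> e)^2 = 1"
  proof -
    have "w \<bullet> w = w \<bullet> ((w \<bullet> N) *\<^sub>R N + (w \<bullet> e) *\<^sub>R e)" using wfr by simp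
    also have "\<dots> = (w \<bullet> N)^2 + (w \<bullet> e)^2" by (simp add: inner_add_right power2_eq_square)
    finally show ?thesis using ww by simp
  qed
  then have "(w \<bullet> N)^2 + (- (w \<bullet> e))^2 = 1" by simp
  from sincos_total_2pi_le[OF this] obtain b where b: "0 \<le> b" "b \<le> 2*pi"
    "w \<bullet> N = cos b" "- (w \<bullet> e) = sin b" by blast
  define M where "M = A ** rot_unit b Y"
  have rM: "rotation_matrix M" unfolding M_def using rotm_mul rotm_rot_unit rA Y by blast
  have MY: "M *v Y = g *v Y" unfolding M_def
    by (simp add: matrix_vector_mul_assoc[symmetric] rod_fix Y AY p_def)
  have we: "w \<bullet> e = - sin b" using b by simp
  have w2: "w = cos b *\<^sub>R N + (- sin b) *\<^sub>R e" using wfr unfolding b(3) we .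
  have RbN: "rot_unit b Y *v N = w"
    by (subst w2) (simp add: rod YNc YN)
  have AAt: "A *v (transpose A *v x) = x" for x
    using oA unfolding orthogonal_matrix_def by (simp only: matrix_vector_mul_assoc matrix_vector_mul_lid)
  have MN: "M *v N = g *v N" unfolding M_def
    by (simp only: matrix_vector_mul_assoc[symmetric] RbN w_def AAt)
  have Me: "M *v e = g *v e" unfolding e_def
    using cross_rotation_matrix[OF rM, of N Y] cross_rotation_matrix[OF g, of N Y] MY MN by simp
  have "M = g"
    unfolding matrix_eq
  proof
    fix x
    have "M *v x = M *v ((x \<bullet> N) *\<^sub>R N + (x \<bullet> Y) *\<^sub>R Y + (x \<bullet> e) *\<^sub>R e)" using fr[of x] by simp
    also have "\<dots> = g *v ((x \<bullet> N) *\<^sub>R N + (x \<bullet> Y) *\<^sub>R Y + (x \<bullet> e) *\<^sub>R e)"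
      by (simp add: matrix_vector_right_distrib matrix_vector_mult_scaleR MY MN Me)
    also have "\<dots> = g *v x" using fr[of x] by simp
    finally show "M *v x = g *v x" .
  qed
  then have "g = rot_unit a Y ** (rot_unit \<beta> N ** rot_unit b Y)"
    unfolding M_def A_def by (simp add: matrix_mul_assoc)
  then show ?thesis using a b unfolding \<beta>_def z_def p_def by blast
qed




lemma coef_unique:
  fixes X Y :: "real^3"
  assumes X: "norm X = 1" and Y: "norm Y = 1" and c: "\<bar>X \<bullet> Y\<bar> < 1"
    and eq: "a *\<^sub>R X + b *\<^sub>R Y = a' *\<^sub>R X + b' *\<^sub>R Y"
  shows "a = a'"
proof -
  define c0 where "c0 = X \<bullet> Y"
  have XX: "X \<bullet> X = 1" and YY: "Y \<bullet> Y = 1" using X Y by (simp_all add: norm_eq_1)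
  have YX: "Y \<bullet> X = c0" by (simp add: c0_def inner_commute)
  have e1: "a + b * c0 = a' + b' * c0"
    using arg_cong[OF eq, of "\<lambda>v. v \<bullet> X"] by (simp add: inner_add_left XX YX)
  have e2: "a * c0 + b = a' * c0 + b'"
    using arg_cong[OF eq, of "\<lambda>v. v \<bullet> Y"] by (simp add: inner_add_left YY c0_def)
  have "(a - a') * (1 - c0 * c0) = 0" using e1 e2 by algebra
  moreover have "c0 * c0 < 1" using c unfolding c0_def
    by (metis abs_square_less_1 power2_eq_square)
  ultimately show ?thesis by simp
qed

lemma cost_eq:
  fixes X Y :: "real^3"
  assumes X: "norm X = 1" and Y: "norm Y = 1" and c: "\<bar>X \<bullet> Y\<bar> < 1"
  shows "cost 0 X Y (a *\<^sub>R X + b *\<^sub>R Y) = \<bar>a\<bar>"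
  unfolding cost_def
proof (rule the_equality)
  show "\<exists>a' b'. a *\<^sub>R X + b *\<^sub>R Y = a' *\<^sub>R X + b' *\<^sub>R Y \<and> \<bar>a\<bar> = \<bar>a'\<bar> + 0 * \<bar>b'\<bar>" by auto
next
  fix r assume "\<exists>a' b'. a *\<^sub>R X + b *\<^sub>R Y = a' *\<^sub>R X + b' *\<^sub>R Y \<and> r = \<bar>a'\<bar> + 0 * \<bar>b'\<bar>"
  then obtain a' b' where "a *\<^sub>R X + b *\<^sub>R Y = a' *\<^sub>R X + b' *\<^sub>R Y" "r = \<bar>a'\<bar>" by auto
  then show "r = \<bar>a\<bar>" using coef_unique[OF X Y c] by metis
qed

lemma span2: "C \<in> span {X, Y} \<Longrightarrow> \<exists>a b. C = a *\<^sub>R X + b *\<^sub>R (Y::real^3)"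
proof -
  assume "C \<in> span {X, Y}"
  then obtain k where "C - k *\<^sub>R X \<in> span {Y}" by (auto simp: span_insert)
  then obtain j where "C - k *\<^sub>R X = j *\<^sub>R Y" by (auto simp: span_singleton)
  then have "C = k *\<^sub>R X + j *\<^sub>R Y" by (simp add: algebra_simps)
  then show ?thesis by blast
qed

lemma factor_bound:
  fixes X Y C :: "real^3"
  assumes Y: "norm Y = 1" and C: "C \<noteq> 0" and t: "0 \<le> \<tau>" and CE: "C = a *\<^sub>R X + b *\<^sub>R Y"
  shows "arccos (Y \<bullet> (rot \<tau> C *v Y)) \<le> \<tau> * (\<bar>a\<bar> * norm (X \<times> Y))"
proof -
  define n where "n = norm C"
  have n: "n > 0" using C by (simp add: n_def)
  define u where "u = inverse n *\<^sub>R C"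
  define th where "th = \<tau> * n"
  have u: "norm u = 1" using C by (simp add: u_def n_def)
  have R: "rot \<tau> C = rot_unit th u" by (simp add: rot_def th_def u_def n_def)
  have YY: "Y \<bullet> Y = 1" using Y by (simp add: norm_eq_1)
  define r where "r = norm (u \<times> Y)"
  have r2: "r^2 + (u \<bullet> Y)^2 = 1" using norm_cross_dot[of u Y] u Y by (simp add: r_def)
  have r0: "0 \<le> r" by (simp add: r_def)
  have r1: "r \<le> 1"
  proof -
    have "r^2 \<le> 1" using r2 by (smt (verit) zero_le_power2)
    then show ?thesis using r0 by (simp add: power_le_one_iff abs_square_le_1)
  qed
  have "Y \<bullet> (rot \<tau> C *v Y) = cos th + (1 - cos th) * (u \<bullet> Y)^2"
    unfolding R rod by (simp add: inner_add_right YY dot_cross_self inner_commute power2_eq_square)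
  also have "\<dots> = 1 - (1 - cos th) * r^2" using r2 by algebra
  finally have eq: "Y \<bullet> (rot \<tau> C *v Y) = 1 - (1 - cos th) * r^2" .
  have th0: "0 \<le> th" using t n by (simp add: th_def)
  have "arccos (Y \<bullet> (rot \<tau> C *v Y)) \<le> th * r" unfolding eq by (rule rot_angle_bound[OF r0 r1 th0])
  also have "th * r = \<tau> * norm (C \<times> Y)"
    using n by (simp add: th_def r_def u_def cross_mult_left n_def)
  also have "C \<times> Y = a *\<^sub>R (X \<times> Y)" by (simp add: CE cross_add_left cross_mult_left)
  finally show ?thesis by simp
qed

lemma word_bound:
  fixes X Y :: "real^3"
  assumes X: "norm X = 1" and Y: "norm Y = 1" and c: "\<bar>X \<bullet> Y\<bar> < 1"
  shows "(\<forall>(t, C) \<in> set ds. 0 \<le> t \<and> C \<noteq> 0 \<and> C \<in> span {X, Y}) \<Longrightarrow>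
    orthogonal_matrix (word_prod ds) \<and>
    arccos (Y \<bullet> (word_prod ds *v Y)) \<le> norm (X \<times> Y) * word_cost 0 X Y ds"
proof (induction ds)
  case Nil
  have "Y \<bullet> Y = 1" using Y by (simp add: norm_eq_1)
  then show ?case by (simp add: word_prod_def word_cost_def orthogonal_matrix_id)
next
  case (Cons tc ds)
  obtain t C where tc: "tc = (t, C)" by (cases tc)
  have t: "0 \<le> t" and C: "C \<noteq> 0" and Cs: "C \<in> span {X, Y}" using Cons.prems tc by auto
  have IH: "orthogonal_matrix (word_prod ds) \<and>
    arccos (Y \<bullet> (word_prod ds *v Y)) \<le> norm (X \<times> Y) * word_cost 0 X Y ds"
    using Cons.IH Cons.prems by auto
  obtain a b where CE: "C = a *\<^sub>R X + b *\<^sub>R Y" using span2[OF Cs] by blast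
  have cost: "cost 0 X Y C = \<bar>a\<bar>" unfolding CE by (rule cost_eq[OF X Y c])
  define R where "R = rot t C"
  define h where "h = word_prod ds"
  have oR: "orthogonal_matrix R" using rotm_rot[OF C] by (simp add: R_def rotation_matrix_def)
  have oh: "orthogonal_matrix h" using IH by (simp add: h_def)
  have wp: "word_prod (tc # ds) = R ** h" by (simp add: word_prod_def tc R_def h_def)
  have wc: "word_cost 0 X Y (tc # ds) = t * \<bar>a\<bar> + word_cost 0 X Y ds"
    by (simp add: word_cost_def tc cost)
  define q where "q = transpose R *v Y"
  have nq: "norm q = 1" unfolding q_def using orth_norm[of "transpose R" Y] oR Y by simp
  have nh: "norm (h *v Y) = 1" using orth_norm[OF oh] Y by simp
  have "Y \<bullet> ((R ** h) *v Y) = q \<bullet> (h *v Y)"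
    by (simp only: q_def matrix_vector_mul_assoc[symmetric] dot_transpose)
  moreover have "q \<bullet> Y = Y \<bullet> (R *v Y)" by (simp only: q_def dot_transpose)
  ultimately have "arccos (Y \<bullet> ((R ** h) *v Y)) \<le> arccos (Y \<bullet> (R *v Y)) + arccos (Y \<bullet> (h *v Y))"
    using arccos_tri[OF nq Y nh] by simp
  also have "\<dots> \<le> t * (\<bar>a\<bar> * norm (X \<times> Y)) + norm (X \<times> Y) * word_cost 0 X Y ds"
    using factor_bound[OF Y C t CE] IH by (simp add: R_def h_def add_mono)
  finally show ?case using oR oh wp wc orthogonal_matrix_mul
    by (simp add: algebra_simps)
qed




lemma first_factor:
  fixes Y :: "real^3"
  assumes Y: "norm Y = 1" and a: "0 \<le> a" "a \<le> 2*pi"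
  shows "\<exists>t1 sg. 0 \<le> t1 \<and> t1 \<le> pi \<and> rot t1 (if sg then Y else - Y) = rot_unit a Y"
proof (cases "a \<le> pi")
  case True
  then show ?thesis using a Y by (intro exI[of _ a] exI[of _ True]) (simp add: rot_def)
next
  case False
  have "rot (2*pi - a) (- Y) = rot_unit a Y"
    using Y by (simp add: rot_def rot_unit_neg rot_unit_per[of a Y, symmetric])
  then show ?thesis using False a by (intro exI[of _ "2*pi - a"] exI[of _ False]) simp
qed

lemma word_shape:
  "\<exists>\<sigma>\<in>sym_group. \<exists>P\<in>{pattern_IX t, pattern_X t}.
     eval_word 0 c X Y (apply_sym \<sigma> P) =
     [(pi, if sg1 then Y else - Y), (t, X - c *\<^sub>R Y), (pi, if sg3 then Y else - Y)]"
proof (cases sg1; cases sg3)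
  assume "sg1" "sg3" then show ?thesis
    by (intro bexI[of _ id] bexI[of _ "pattern_IX t"])
      (simp_all add: sym_group_def eval_word_def apply_sym_def pattern_IX_def slab_vec_def lab_vec_def)
next
  assume "sg1" "\<not> sg3" then show ?thesis
    by (intro bexI[of _ id] bexI[of _ "pattern_X t"])
      (simp_all add: sym_group_def eval_word_def apply_sym_def pattern_X_def slab_vec_def lab_vec_def)
next
  assume "\<not> sg1" "\<not> sg3" then show ?thesis
    by (intro bexI[of _ rho] bexI[of _ "pattern_IX t"])
      (simp_all add: sym_group_def eval_word_def apply_sym_def pattern_IX_def slab_vec_def lab_vec_def
         rho_def rho_lab_def)
next
  assume "\<not> sg1" "sg3" then show ?thesis
    by (intro bexI[of _ rho] bexI[of _ "pattern_X t"])
      (simp_all add: sym_group_def eval_word_def apply_sym_def pattern_X_def slab_vec_def lab_vec_def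
         rho_def rho_lab_def)
qed

theorem theorem2p4:
  fixes X Y :: "real^3" and \<alpha> :: real and g :: "real^3^3"
  assumes "norm X = 1" and "norm Y = 1"
    and "0 < \<alpha>" and "\<alpha> \<le> pi / 2" and "X \<bullet> Y = cos \<alpha>"
    and "g \<in> SO3"
  shows "\<exists>ds. optimal_decomp 0 X Y g ds \<and>
           (\<exists>t \<ge> 0. \<exists>\<sigma> \<in> sym_group. \<exists>P \<in> {pattern_IX t, pattern_X t}.
              is_subword ds (eval_word 0 (cos \<alpha>) X Y (apply_sym \<sigma> P)))"
proof -
  note X = assms(1) and Y = assms(2)
  define c where "c = cos \<alpha>"
  define s where "s = sin \<alpha>"
  have s0: "0 < s" unfolding s_def using assms(3,4) by (intro sin_gt_zero) auto
  have c0: "0 \<le> c" unfolding c_def using assms(3,4) by (intro cos_ge_zero) auto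
  have c1: "c < 1" unfolding c_def using cos_monotone_0_pi[of 0 \<alpha>] assms(3,4) by simp
  have XY: "X \<bullet> Y = c" using assms(5) by (simp add: c_def)
  have cabs: "\<bar>X \<bullet> Y\<bar> < 1" using XY c0 c1 by simp
  have sc: "s^2 + c^2 = 1" by (simp add: s_def c_def)
  have XX: "X \<bullet> X = 1" and YY: "Y \<bullet> Y = 1" using X Y by (simp_all add: norm_eq_1)
  have nXY: "norm (X \<times> Y) = s"
  proof -
    have "(norm (X \<times> Y))^2 = s^2" using norm_cross_dot[of X Y] X Y XY sc by simp
    then show ?thesis using s0 by (simp add: power2_eq_iff_nonneg)
  qed
  define W where "W = X - c *\<^sub>R Y"
  have WW: "W \<bullet> W = s^2"
    unfolding W_def using sc by (simp add: inner_diff_left inner_diff_right XX YY XY inner_commute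
        power2_eq_square algebra_simps)
  have nW: "norm W = s" using WW s0 by (simp add: norm_eq_sqrt_inner real_sqrt_unique)
  define N where "N = inverse s *\<^sub>R W"
  have nN: "norm N = 1" using nW s0 by (simp add: N_def)
  have NY: "N \<bullet> Y = 0" unfolding N_def W_def by (simp add: inner_diff_left XY YY)
  have rg: "rotation_matrix g" using assms(6) by (simp add: SO3_def rotation_matrix_def)
  define \<beta> where "\<beta> = arccos (Y \<bullet> (g *v Y))"
  have b0: "0 \<le> \<beta>" unfolding \<beta>_def
    using inner_unit_bound[of Y "g *v Y"] Y orth_norm[of g Y] rg
    by (intro arccos_lbound) (auto simp: rotation_matrix_def abs_le_iff)
  obtain a b where ab: "0 \<le> a" "a \<le> 2*pi" "0 \<le> b" "b \<le> 2*pi"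
    and geq: "g = rot_unit a Y ** (rot_unit \<beta> N ** rot_unit b Y)"
    using euler[OF nN Y NY rg] unfolding \<beta>_def by blast
  obtain t1 sg1 where f1: "0 \<le> t1" "t1 \<le> pi" "rot t1 (if sg1 then Y else - Y) = rot_unit a Y"
    using first_factor[OF Y ab(1,2)] by blast
  obtain t2 sg3 where f3: "0 \<le> t2" "t2 \<le> pi" "rot t2 (if sg3 then Y else - Y) = rot_unit b Y"
    using first_factor[OF Y ab(3,4)] by blast
  define t where "t = \<beta> / s"
  have t0: "0 \<le> t" using b0 s0 by (simp add: t_def)
  have rotW: "rot t W = rot_unit \<beta> N"
    using s0 nW by (simp add: rot_def t_def N_def)
  define V1 where "V1 = (if sg1 then Y else - Y)"
  define V3 where "V3 = (if sg3 then Y else - Y)"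
  define ds where "ds = [(t1, V1), (t, W), (t2, V3)]"
  obtain \<sigma> P where \<sigma>: "\<sigma> \<in> sym_group" and P: "P \<in> {pattern_IX t, pattern_X t}"
    and ew: "eval_word 0 c X Y (apply_sym \<sigma> P) = [(pi, V1), (t, W), (pi, V3)]"
    using word_shape[of t c X Y sg1 sg3] unfolding V1_def V3_def W_def by blast
  have sub: "is_subword ds (eval_word 0 c X Y (apply_sym \<sigma> P))"
    unfolding ew is_subword_def ds_def
    by (rule exI[of _ 0], rule exI[of _ 2], rule exI[of _ t1], rule exI[of _ t2]) (simp add: f1 f3)
  have Ynz: "Y \<noteq> 0" using Y by auto
  have Wnz: "W \<noteq> 0" using nW s0 by auto
  have Ysp: "Y \<in> span {X, Y}" by (simp add: span_base)
  have Xsp: "X \<in> span {X, Y}" by (simp add: span_base)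
  have V1sp: "V1 \<in> span {X, Y}" and V3sp: "V3 \<in> span {X, Y}"
    unfolding V1_def V3_def using Ysp by (auto intro: span_neg)
  have Wsp: "W \<in> span {X, Y}" unfolding W_def using Xsp Ysp by (intro span_diff span_scale)
  have V1nz: "V1 \<noteq> 0" and V3nz: "V3 \<noteq> 0" unfolding V1_def V3_def using Ynz by auto
  have wp: "word_prod ds = g"
    unfolding ds_def word_prod_def using f1(3) f3(3) rotW geq
    by (simp add: V1_def V3_def)
  have dec: "is_decomp X Y g ds"
    unfolding is_decomp_def using wp f1 f3 t0 V1sp V3sp Wsp V1nz V3nz Wnz
    by (simp add: ds_def)
  have costY: "cost 0 X Y Y = 0" using cost_eq[OF X Y cabs, of 0 1] by simp
  have costmY: "cost 0 X Y (- Y) = 0" using cost_eq[OF X Y cabs, of 0 "-1"] by simp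
  have costW: "cost 0 X Y W = 1" using cost_eq[OF X Y cabs, of 1 "- c"] by (simp add: W_def)
  have cV1: "cost 0 X Y V1 = 0" and cV3: "cost 0 X Y V3 = 0"
    unfolding V1_def V3_def using costY costmY by auto
  have wc: "word_cost 0 X Y ds = t"
    by (simp add: word_cost_def ds_def cV1 cV3 costW)
  have lb: "t \<le> word_cost 0 X Y ds'" if "is_decomp X Y g ds'" for ds'
  proof -
    have "arccos (Y \<bullet> (word_prod ds' *v Y)) \<le> norm (X \<times> Y) * word_cost 0 X Y ds'"
      using word_bound[OF X Y cabs, of ds'] that by (simp add: is_decomp_def)
    then have "\<beta> \<le> s * word_cost 0 X Y ds'" using that nXY
      by (simp add: is_decomp_def \<beta>_def)
    then show ?thesis using s0 by (simp add: t_def pos_divide_le_eq mult.commute)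
  qed
  have inf: "Inf (word_cost 0 X Y ` {ds'. is_decomp X Y g ds'}) = t"
    by (rule cInf_eq_minimum) (use dec wc lb in auto)
  have "optimal_decomp 0 X Y g ds" unfolding optimal_decomp_def using dec wc inf by simp
  then show ?thesis using t0 \<sigma> P sub unfolding c_def by blast
qed


end
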